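(* Let $n \geq 5$ and fix $\tau \in [0, \cos(2\pi/5))$ with $\tau \notin \{\cos(2\pi(i-1)/n) : i = 1,\dots,n\}$. Let $X \in (\mathbb{S}^1)^n$ be the regular $n$-gon, $x_i = (\cos\theta_i, \sin\theta_i)$ with $\theta_i = 2\pi(i-1)/n$. There exists $\varepsilon_{n,\tau} > 0$ such that for all $\varepsilon \in (0, \varepsilon_{n,\tau}]$, $X$ is a critical point of $f(X) = \frac12 \sum_{i,j=1}^n \varphi_{\varepsilon,\tau}(x_i^\top x_j)$ (all weights equal to 1), and the Riemannian Hessian of $f$ at $X$ has one zero eigenvalue and its other $n-1$ eigenvalues are negative.
   Context: $(\mathbb{S}^1)^n$ is the set of $X\in\mathbb{R}^{2\times n}$ with unit-norm columns, a Riemannian submanifold with the Frobenius metric. $\varphi_{\varepsilon,\tau}(t) = \varepsilon\log(1 + e^{(t-\tau)/\varepsilon})$ for $\varepsilon>0$. *)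

theory Defs
  imports "HOL-Analysis.Analysis"
begin

text \<open>A point of R^(2 x n) is represented as a function from column indices to R^2;
  only the columns 0..n-1 are meaningful (column k corresponds to the paper's x_(k+1)).\<close>
type_synonym cmat = "nat \<Rightarrow> real^2"

definition phi :: "real \<Rightarrow> real \<Rightarrow> real \<Rightarrow> real" where
  "phi eps tau t = eps * ln (1 + exp ((t - tau) / eps))"

definition fcost :: "nat \<Rightarrow> real \<Rightarrow> real \<Rightarrow> cmat \<Rightarrow> real" where
  "fcost n eps tau X = (1/2) * (\<Sum>i<n. \<Sum>j<n. phi eps tau (X i \<bullet> X j))"

definition frob :: "nat \<Rightarrow> cmat \<Rightarrow> cmat \<Rightarrow> real" where
  "frob n V W = (\<Sum>i<n. V i \<bullet> W i)"

definition on_torus :: "nat \<Rightarrow> cmat \<Rightarrow> bool" where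
  "on_torus n X \<longleftrightarrow> (\<forall>i<n. norm (X i) = 1)"

definition tangent :: "nat \<Rightarrow> cmat \<Rightarrow> cmat \<Rightarrow> bool" where
  "tangent n X V \<longleftrightarrow> (\<forall>i<n. X i \<bullet> V i = 0) \<and> (\<forall>i\<ge>n. V i = 0)"

definition proj :: "nat \<Rightarrow> cmat \<Rightarrow> cmat \<Rightarrow> cmat" where
  "proj n X Z = (\<lambda>i. if i < n then Z i - (X i \<bullet> Z i) *\<^sub>R X i else 0)"

definition egrad :: "nat \<Rightarrow> (cmat \<Rightarrow> real) \<Rightarrow> cmat \<Rightarrow> cmat" where
  "egrad n F X = (\<lambda>i. if i < n then
       (\<chi> k. deriv (\<lambda>t. F (X(i := X i + t *\<^sub>R axis k 1))) 0) else 0)"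

text \<open>Riemannian gradient for the Riemannian submanifold (S^1)^n of R^(2 x n)
  (Frobenius metric): projection of the Euclidean gradient. The same formula gives a smooth
  extension of the gradient field to all of R^(2 x n).\<close>
definition rgrad :: "nat \<Rightarrow> (cmat \<Rightarrow> real) \<Rightarrow> cmat \<Rightarrow> cmat" where
  "rgrad n F X = proj n X (egrad n F X)"

text \<open>Riemannian Hessian of a Riemannian submanifold: Hess f(X)[V] = Proj_X (D gbar(X)[V]),
  where gbar is the smooth extension of the Riemannian gradient field.\<close>
definition rhess :: "nat \<Rightarrow> (cmat \<Rightarrow> real) \<Rightarrow> cmat \<Rightarrow> cmat \<Rightarrow> cmat" where
  "rhess n F X V = proj n X
     (\<lambda>i. vector_derivative (\<lambda>t. rgrad n F (\<lambda>j. X j + t *\<^sub>R V j) i) (at 0))"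

definition critical_point :: "nat \<Rightarrow> (cmat \<Rightarrow> real) \<Rightarrow> cmat \<Rightarrow> bool" where
  "critical_point n F X \<longleftrightarrow> on_torus n X \<and> (\<forall>i<n. rgrad n F X i = 0)"

text \<open>The eigenvalues (with multiplicity) of the self-adjoint operator Hess f(X) on the
  n-dimensional tangent space T_X are lam 0, ..., lam (n-1): there is an orthonormal basis
  w 0, ..., w (n-1) of T_X (n orthonormal tangent vectors) of eigenvectors.\<close>
definition hess_eigenvalues :: "nat \<Rightarrow> (cmat \<Rightarrow> real) \<Rightarrow> cmat \<Rightarrow> (nat \<Rightarrow> real) \<Rightarrow> bool" where
  "hess_eigenvalues n F X lam \<longleftrightarrow>
     (\<exists>w :: nat \<Rightarrow> cmat.
        (\<forall>k<n. tangent n X (w k)) \<and>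
        (\<forall>k<n. \<forall>l<n. frob n (w k) (w l) = (if k = l then 1 else 0)) \<and>
        (\<forall>k<n. \<forall>i<n. rhess n F X (w k) i = lam k *\<^sub>R w k i))"

definition regular_ngon :: "nat \<Rightarrow> cmat" where
  "regular_ngon n = (\<lambda>k. vector [cos (2 * pi * real k / real n), sin (2 * pi * real k / real n)])"

end

theory Submission imports Defs "HOL-Real_Asymp.Real_Asymp" begin

definition ps :: "real \<Rightarrow> real \<Rightarrow> real \<Rightarrow> real" where
  "ps eps tau x = exp ((x - tau) / eps) / (1 + exp ((x - tau) / eps))"
definition pss :: "real \<Rightarrow> real \<Rightarrow> real \<Rightarrow> real" where
  "pss eps tau x = exp ((x - tau) / eps) / (eps * (1 + exp ((x - tau) / eps))^2)"

lemma a1: "eps > 0 \<Longrightarrow> 0 < A \<Longrightarrow> eps * (inverse A * (E * (1 / eps))) = E / (A::real)"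
  by (simp add: field_simps)

lemma phi_deriv:
  assumes e: "eps > 0" shows "(phi eps tau has_real_derivative ps eps tau x) (at x)"
proof -
  have pos: "0 < 1 + exp y" for y :: real using exp_gt_zero[of y] by linarith
  let ?u = "(x - tau) / eps"
  have d1: "((\<lambda>x. (x - tau) / eps) has_real_derivative 1 / eps) (at x)"
    using e by (auto intro!: derivative_eq_intros)
  have d3: "((\<lambda>x. 1 + exp ((x - tau) / eps)) has_real_derivative exp ?u * (1 / eps)) (at x)"
    using DERIV_add[OF DERIV_const DERIV_chain2[OF DERIV_exp d1]] by simp
  have d4: "((\<lambda>x. ln (1 + exp ((x - tau) / eps))) has_real_derivative inverse (1 + exp ?u) * (exp ?u * (1 / eps))) (at x)"
    by (rule DERIV_chain2[OF DERIV_ln[OF pos] d3])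
  have "((\<lambda>x. eps * ln (1 + exp ((x - tau) / eps))) has_real_derivative eps * (inverse (1 + exp ?u) * (exp ?u * (1 / eps)))) (at x)"
    by (rule DERIV_cmult[OF d4])
  moreover have "eps * (inverse (1 + exp ?u) * (exp ?u * (1 / eps))) = ps eps tau x"
    unfolding ps_def by (rule a1[OF e pos])
  ultimately show ?thesis unfolding phi_def[abs_def] by simp
qed

lemma ps_deriv:
  assumes e: "eps > 0" shows "(ps eps tau has_real_derivative pss eps tau x) (at x)"
proof -
  have pos: "0 < 1 + exp y" for y :: real using exp_gt_zero[of y] by linarith
  let ?u = "(x - tau) / eps"
  have d1: "((\<lambda>x. (x - tau) / eps) has_real_derivative 1 / eps) (at x)"
    using e by (auto intro!: derivative_eq_intros)
  have d2: "((\<lambda>x. exp ((x - tau) / eps)) has_real_derivative exp ?u * (1 / eps)) (at x)"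
    by (rule DERIV_chain2[OF DERIV_exp d1])
  have d3: "((\<lambda>x. 1 + exp ((x - tau) / eps)) has_real_derivative exp ?u * (1 / eps)) (at x)"
    using DERIV_add[OF DERIV_const d2] by simp
  have "((\<lambda>x. exp ((x - tau) / eps) / (1 + exp ((x - tau) / eps))) has_real_derivative
     ((exp ?u * (1 / eps)) * (1 + exp ?u) - exp ?u * (exp ?u * (1 / eps))) / ((1 + exp ?u) * (1 + exp ?u))) (at x)"
    by (rule DERIV_divide[OF d2 d3]) (use pos[of ?u] in simp)
  moreover have "((exp ?u * (1 / eps)) * (1 + exp ?u) - exp ?u * (exp ?u * (1 / eps))) / ((1 + exp ?u) * (1 + exp ?u))
      = pss eps tau x"
    unfolding pss_def using e pos[of ?u] by (simp add: field_simps power2_eq_square)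
  ultimately show ?thesis unfolding ps_def[abs_def] by simp
qed

lemma inner_poly: "(a + t *\<^sub>R b) \<bullet> (c + t *\<^sub>R (d::'a::real_inner)) = a \<bullet> c + t * (b \<bullet> c + a \<bullet> d) + t^2 * (b \<bullet> d)"
  by (simp add: inner_add_left inner_add_right algebra_simps power2_eq_square)


lemma poly_deriv0: "((\<lambda>t::real. a + t * b + t^2 * c) has_real_derivative b) (at 0)"
  by (auto intro!: derivative_eq_intros)

lemma fcost_line_deriv:
  assumes e: "eps > 0"
  shows "((\<lambda>t. fcost n eps tau (\<lambda>j. X j + t *\<^sub>R E j)) has_real_derivative
           (\<Sum>i<n. \<Sum>l<n. ps eps tau (X i \<bullet> X l) * (E i \<bullet> X l))) (at 0)"
proof -
  have each: "((\<lambda>t. phi eps tau ((X i + t *\<^sub>R E i) \<bullet> (X l + t *\<^sub>R E l))) has_real_derivative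
      ps eps tau (X i \<bullet> X l) * (E i \<bullet> X l + X i \<bullet> E l)) (at 0)" for i l
  proof -
    have "((\<lambda>t. phi eps tau (X i \<bullet> X l + t * (E i \<bullet> X l + X i \<bullet> E l) + t^2 * (E i \<bullet> E l))) has_real_derivative
      ps eps tau (X i \<bullet> X l + 0 * (E i \<bullet> X l + X i \<bullet> E l) + 0^2 * (E i \<bullet> E l)) * (E i \<bullet> X l + X i \<bullet> E l)) (at 0)"
      by (rule DERIV_chain2[OF phi_deriv[OF e] poly_deriv0])
    then show ?thesis by (simp add: inner_poly)
  qed
  have "((\<lambda>t. (1/2) * (\<Sum>i<n. \<Sum>l<n. phi eps tau ((X i + t *\<^sub>R E i) \<bullet> (X l + t *\<^sub>R E l)))) has_real_derivative
      (1/2) * (\<Sum>i<n. \<Sum>l<n. ps eps tau (X i \<bullet> X l) * (E i \<bullet> X l + X i \<bullet> E l))) (at 0)"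
    by (intro DERIV_cmult DERIV_sum each)
  moreover have "(1/2) * (\<Sum>i<n. \<Sum>l<n. ps eps tau (X i \<bullet> X l) * (E i \<bullet> X l + X i \<bullet> E l))
      = (\<Sum>i<n. \<Sum>l<n. ps eps tau (X i \<bullet> X l) * (E i \<bullet> X l))"
  proof -
    have sw: "(\<Sum>i<n. \<Sum>l<n. ps eps tau (X i \<bullet> X l) * (X i \<bullet> E l))
       = (\<Sum>i<n. \<Sum>l<n. ps eps tau (X i \<bullet> X l) * (E i \<bullet> X l))"
      by (subst sum.swap) (simp add: inner_commute)
    show ?thesis by (simp add: distrib_left sum.distrib sw)
  qed
  ultimately show ?thesis unfolding fcost_def by simp
qed
definition gv :: "nat \<Rightarrow> real \<Rightarrow> real \<Rightarrow> cmat \<Rightarrow> nat \<Rightarrow> real^2" where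
  "gv n eps tau X i = (\<Sum>l<n. ps eps tau (X i \<bullet> X l) *\<^sub>R X l)"

lemma egrad_fcost:
  assumes e: "eps > 0" and i: "i < n"
  shows "egrad n (fcost n eps tau) X i = gv n eps tau X i"
proof -
  have "deriv (\<lambda>t. fcost n eps tau (X(i := X i + t *\<^sub>R axis k 1))) 0 = gv n eps tau X i $ k" for k
  proof -
    have fe: "(\<lambda>t. fcost n eps tau (X(i := X i + t *\<^sub>R axis k 1))) =
       (\<lambda>t. fcost n eps tau (\<lambda>j. X j + t *\<^sub>R (if j = i then axis k 1 else 0)))"
      by (intro ext arg_cong[where f="fcost n eps tau"]) auto
    have "deriv (\<lambda>t. fcost n eps tau (X(i := X i + t *\<^sub>R axis k 1))) 0 =
      (\<Sum>j<n. \<Sum>l<n. ps eps tau (X j \<bullet> X l) * ((if j = i then axis k 1 else 0) \<bullet> X l))"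
      unfolding fe by (rule DERIV_imp_deriv[OF fcost_line_deriv[OF e]])
    also have "\<dots> = (\<Sum>l<n. ps eps tau (X i \<bullet> X l) * (axis k 1 \<bullet> X l))"
    proof -
      have "(\<Sum>j<n. \<Sum>l<n. ps eps tau (X j \<bullet> X l) * ((if j = i then axis k 1 else 0) \<bullet> X l))
         = (\<Sum>j<n. if j = i then (\<Sum>l<n. ps eps tau (X j \<bullet> X l) * (axis k 1 \<bullet> X l)) else 0)"
        by (rule sum.cong) auto
      then show ?thesis using i by (simp add: sum.delta)
    qed
    also have "\<dots> = gv n eps tau X i $ k"
      by (simp add: gv_def inner_axis')
    finally show ?thesis .
  qed
  then show ?thesis using i unfolding egrad_def by (simp add: vec_eq_iff)
qed

lemma rgrad_fcost:
  assumes e: "eps > 0" and i: "i < n"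
  shows "rgrad n (fcost n eps tau) X i = gv n eps tau X i - (X i \<bullet> gv n eps tau X i) *\<^sub>R X i"
  using egrad_fcost[OF assms] i unfolding rgrad_def proj_def by simp

definition gd :: "nat \<Rightarrow> real \<Rightarrow> real \<Rightarrow> cmat \<Rightarrow> cmat \<Rightarrow> nat \<Rightarrow> real^2" where
  "gd n eps tau X V i = (\<Sum>l<n. ps eps tau (X i \<bullet> X l) *\<^sub>R V l +
       (pss eps tau (X i \<bullet> X l) * (V i \<bullet> X l + X i \<bullet> V l)) *\<^sub>R X l)"

lemma line_vd: "((\<lambda>t. a + t *\<^sub>R (b::'a::real_normed_vector)) has_vector_derivative b) (at x)"
  by (auto intro!: derivative_eq_intros)

lemma gv_deriv:
  assumes e: "eps > 0"
  shows "((\<lambda>t. gv n eps tau (\<lambda>j. X j + t *\<^sub>R V j) i) has_vector_derivative gd n eps tau X V i) (at 0)"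
  unfolding gv_def gd_def
proof (rule has_vector_derivative_sum)
  fix l
  have r0: "((\<lambda>t. ps eps tau (X i \<bullet> X l + t * (V i \<bullet> X l + X i \<bullet> V l) + t^2 * (V i \<bullet> V l))) has_real_derivative
      pss eps tau (X i \<bullet> X l + 0 * (V i \<bullet> X l + X i \<bullet> V l) + 0^2 * (V i \<bullet> V l)) * (V i \<bullet> X l + X i \<bullet> V l)) (at 0)"
    by (rule DERIV_chain2[OF ps_deriv[OF e] poly_deriv0])
  have r: "((\<lambda>t. ps eps tau ((X i + t *\<^sub>R V i) \<bullet> (X l + t *\<^sub>R V l))) has_real_derivative
      pss eps tau (X i \<bullet> X l) * (V i \<bullet> X l + X i \<bullet> V l)) (at 0)"
    using r0 by (simp add: inner_poly)
  show "((\<lambda>t. ps eps tau ((X i + t *\<^sub>R V i) \<bullet> (X l + t *\<^sub>R V l)) *\<^sub>R (X l + t *\<^sub>R V l)) has_vector_derivative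
     ps eps tau (X i \<bullet> X l) *\<^sub>R V l + (pss eps tau (X i \<bullet> X l) * (V i \<bullet> X l + X i \<bullet> V l)) *\<^sub>R X l) (at 0)"
    using has_vector_derivative_scaleR[OF r line_vd] by simp
qed

lemma inner_vd:
  assumes "(f has_vector_derivative f') (at x)" "(g has_vector_derivative g') (at x)"
  shows "((\<lambda>t. f t \<bullet> g t) has_real_derivative (f x \<bullet> g' + f' \<bullet> g x)) (at x)"
proof -
  have "((\<lambda>t. f t \<bullet> g t) has_derivative (\<lambda>h. f x \<bullet> (h *\<^sub>R g') + (h *\<^sub>R f') \<bullet> g x)) (at x)"
    using has_derivative_inner[OF assms[unfolded has_vector_derivative_def]] .
  moreover have "(\<lambda>h. f x \<bullet> (h *\<^sub>R g') + (h *\<^sub>R f') \<bullet> g x) = (*) (f x \<bullet> g' + f' \<bullet> g x)"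
    by (auto simp: algebra_simps)
  ultimately show ?thesis unfolding has_field_derivative_def by simp
qed

lemma rgrad_line_deriv:
  assumes e: "eps > 0" and i: "i < n"
  shows "((\<lambda>t. rgrad n (fcost n eps tau) (\<lambda>j. X j + t *\<^sub>R V j) i) has_vector_derivative
     gd n eps tau X V i - (V i \<bullet> gv n eps tau X i + X i \<bullet> gd n eps tau X V i) *\<^sub>R X i
       - (X i \<bullet> gv n eps tau X i) *\<^sub>R V i) (at 0)"
proof -
  let ?Y = "\<lambda>t. (\<lambda>j. X j + t *\<^sub>R V j)"
  have fe: "(\<lambda>t. rgrad n (fcost n eps tau) (?Y t) i) =
    (\<lambda>t. gv n eps tau (?Y t) i - (?Y t i \<bullet> gv n eps tau (?Y t) i) *\<^sub>R ?Y t i)"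
    using rgrad_fcost[OF e i] by auto
  have g: "((\<lambda>t. gv n eps tau (?Y t) i) has_vector_derivative gd n eps tau X V i) (at 0)"
    by (rule gv_deriv[OF e])
  have ip: "((\<lambda>t. ?Y t i \<bullet> gv n eps tau (?Y t) i) has_real_derivative
      (X i \<bullet> gd n eps tau X V i + V i \<bullet> gv n eps tau X i)) (at 0)"
    using inner_vd[OF line_vd g] by simp
  have hd: "((\<lambda>t. gv n eps tau (?Y t) i - (?Y t i \<bullet> gv n eps tau (?Y t) i) *\<^sub>R ?Y t i) has_vector_derivative
     gd n eps tau X V i - ((X i \<bullet> gv n eps tau X i) *\<^sub>R V i + (X i \<bullet> gd n eps tau X V i + V i \<bullet> gv n eps tau X i) *\<^sub>R X i)) (at 0)"
    using has_vector_derivative_diff[OF g has_vector_derivative_scaleR[OF ip line_vd]] by simp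
  have eq: "gd n eps tau X V i - ((X i \<bullet> gv n eps tau X i) *\<^sub>R V i + (X i \<bullet> gd n eps tau X V i + V i \<bullet> gv n eps tau X i) *\<^sub>R X i)
    = gd n eps tau X V i - (V i \<bullet> gv n eps tau X i + X i \<bullet> gd n eps tau X V i) *\<^sub>R X i
       - (X i \<bullet> gv n eps tau X i) *\<^sub>R V i"
    by (metis (no_types, lifting) add.commute diff_diff_eq)
  show ?thesis using hd unfolding eq fe .
qed

lemma rhess_fcost:
  assumes e: "eps > 0" and i: "i < n"
  shows "rhess n (fcost n eps tau) X V i =
    (let D = gd n eps tau X V i - (V i \<bullet> gv n eps tau X i + X i \<bullet> gd n eps tau X V i) *\<^sub>R X i
       - (X i \<bullet> gv n eps tau X i) *\<^sub>R V i in D - (X i \<bullet> D) *\<^sub>R X i)"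
proof -
  have vd: "vector_derivative (\<lambda>t. rgrad n (fcost n eps tau) (\<lambda>j. X j + t *\<^sub>R V j) i) (at 0) =
     gd n eps tau X V i - (V i \<bullet> gv n eps tau X i + X i \<bullet> gd n eps tau X V i) *\<^sub>R X i
       - (X i \<bullet> gv n eps tau X i) *\<^sub>R V i"
    by (rule vector_derivative_at[OF rgrad_line_deriv[OF e i]])
  show ?thesis unfolding rhess_def proj_def Let_def by (simp only: if_P[OF i] vd)
qed

definition th :: "nat \<Rightarrow> nat \<Rightarrow> real" where "th n l = 2 * pi * real l / real n"
definition xv :: "nat \<Rightarrow> nat \<Rightarrow> real^2" where "xv n l = vector [cos (th n l), sin (th n l)]"
definition tv :: "nat \<Rightarrow> nat \<Rightarrow> real^2" where "tv n l = vector [- sin (th n l), cos (th n l)]"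
definition W :: "real \<Rightarrow> real \<Rightarrow> real \<Rightarrow> real" where
  "W eps tau d = pss eps tau (cos d) * (sin d)^2 - ps eps tau (cos d) * cos d"

lemma ngon_xv: "regular_ngon n = xv n"
  unfolding regular_ngon_def xv_def th_def by simp

lemma inner_vec2: "(vector [a, b] :: real^2) \<bullet> vector [c, d] = a * c + b * d"
  by (simp add: inner_vec_def sum_2 vector_2)

lemma xx: "xv n i \<bullet> xv n l = cos (th n l - th n i)"
  unfolding xv_def by (simp add: inner_vec2 cos_diff algebra_simps)
lemma tx: "tv n i \<bullet> xv n l = sin (th n l - th n i)"
  unfolding xv_def tv_def by (simp add: inner_vec2 sin_diff algebra_simps)
lemma xt: "xv n i \<bullet> tv n l = - sin (th n l - th n i)"
  unfolding xv_def tv_def by (simp add: inner_vec2 sin_diff algebra_simps)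
lemma tt: "tv n i \<bullet> tv n l = cos (th n l - th n i)"
  unfolding tv_def by (simp add: inner_vec2 cos_diff algebra_simps)

lemma decomp2: "v = (xv n i \<bullet> v) *\<^sub>R xv n i + (tv n i \<bullet> v) *\<^sub>R tv n i"
proof -
  define c where "c = cos (th n i)"
  define s where "s = sin (th n i)"
  have sc: "s * s + c * c = 1" unfolding s_def c_def by (simp flip: power2_eq_square)
  have x1: "xv n i $ 1 = c" "xv n i $ 2 = s" "tv n i $ 1 = - s" "tv n i $ 2 = c"
    unfolding xv_def tv_def c_def s_def by simp_all
  have ix: "xv n i \<bullet> v = c * v $ 1 + s * v $ 2" and it: "tv n i \<bullet> v = - s * v $ 1 + c * v $ 2"
    by (simp_all add: inner_vec_def sum_2 x1)
  have e1: "v $ 1 = (c * v $ 1 + s * v $ 2) * c + (- s * v $ 1 + c * v $ 2) * (- s)"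
  proof -
    have "(c * v $ 1 + s * v $ 2) * c + (- s * v $ 1 + c * v $ 2) * (- s) = v $ 1 * (s * s + c * c)"
      by (simp add: algebra_simps)
    then show ?thesis using sc by simp
  qed
  have e2: "v $ 2 = (c * v $ 1 + s * v $ 2) * s + (- s * v $ 1 + c * v $ 2) * c"
  proof -
    have "(c * v $ 1 + s * v $ 2) * s + (- s * v $ 1 + c * v $ 2) * c = v $ 2 * (s * s + c * c)"
      by (simp add: algebra_simps)
    then show ?thesis using sc by simp
  qed
  show ?thesis unfolding vec_eq_iff forall_2 using e1 e2 by (simp add: ix it x1)
qed

lemma proj_t: "D - (xv n i \<bullet> D) *\<^sub>R xv n i = (tv n i \<bullet> D) *\<^sub>R tv n i"
  using decomp2[of D n i] by (metis add_diff_cancel_left')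

lemma hess_scalar:
  assumes e: "eps > 0" and i: "i < n"
    and V: "V = (\<lambda>l. (if l < n then a l else 0) *\<^sub>R tv n l)"
  shows "rhess n (fcost n eps tau) (regular_ngon n) V i =
     (\<Sum>l<n. (a i - a l) * W eps tau (th n l - th n i)) *\<^sub>R tv n i"
proof -
  let ?X = "xv n"
  have ti: "tv n i \<bullet> tv n i = 1" "tv n i \<bullet> xv n i = 0" using tt[of n i i] tx[of n i i] by simp_all
  have Vi: "V i = a i *\<^sub>R tv n i" using V i by simp
  have Vl: "\<And>l. l < n \<Longrightarrow> V l = a l *\<^sub>R tv n l" using V by simp
  have tgd: "tv n i \<bullet> gd n eps tau ?X V i = (\<Sum>l<n. ps eps tau (cos (th n l - th n i)) * (a l * cos (th n l - th n i))
      + pss eps tau (cos (th n l - th n i)) * (a i * sin (th n l - th n i) - a l * sin (th n l - th n i)) * sin (th n l - th n i))"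
    unfolding gd_def inner_sum_right
    by (rule sum.cong) (simp_all add: Vi Vl inner_add_right inner_add_left xx tx xt tt)
  have xg: "xv n i \<bullet> gv n eps tau ?X i = (\<Sum>l<n. ps eps tau (cos (th n l - th n i)) * cos (th n l - th n i))"
    unfolding gv_def inner_sum_right by (simp add: xx)
  have "rhess n (fcost n eps tau) (regular_ngon n) V i =
    (tv n i \<bullet> gd n eps tau ?X V i - (xv n i \<bullet> gv n eps tau ?X i) * a i) *\<^sub>R tv n i"
    unfolding ngon_xv rhess_fcost[OF e i] Let_def proj_t
    by (simp add: inner_diff_right Vi ti)
  also have "tv n i \<bullet> gd n eps tau ?X V i - (xv n i \<bullet> gv n eps tau ?X i) * a i
      = (\<Sum>l<n. (a i - a l) * W eps tau (th n l - th n i))"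
    unfolding tgd xg sum_distrib_right sum_subtractf[symmetric] W_def
    by (rule sum.cong) (simp_all add: algebra_simps power2_eq_square)
  finally show ?thesis .
qed

lemma per_mult:
  assumes p: "\<And>m. h (m + int n) = (h m :: real)"
  shows "h (m + int n * int q) = h m"
proof (induction q)
  case 0 then show ?case by simp
next
  case (Suc q)
  have "h (m + int n * int (Suc q)) = h ((m + int n * int q) + int n)" by (simp add: algebra_simps)
  then show ?case using p Suc by simp
qed

lemma shift_nat:
  assumes p: "\<And>m. h (m + int n) = (h m :: real)"
  shows "(\<Sum>l<n. h (int l + int s)) = (\<Sum>l<n. h (int l))"
proof (induction s)
  case 0 then show ?case by simp
next
  case (Suc s)
  let ?f = "\<lambda>l. h (int l + int s)"
  have a: "(\<Sum>l<Suc n. ?f l) = ?f 0 + (\<Sum>l<n. ?f (Suc l))" by (rule sum.lessThan_Suc_shift)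
  have b: "(\<Sum>l<Suc n. ?f l) = (\<Sum>l<n. ?f l) + ?f n" by simp
  have c: "?f n = ?f 0" using p[of "int s"] by (simp add: add.commute)
  have "(\<Sum>l<n. h (int l + int (Suc s))) = (\<Sum>l<n. ?f (Suc l))" by (simp add: algebra_simps)
  also have "\<dots> = (\<Sum>l<n. ?f l)" using a b c by linarith
  finally show ?case using Suc by simp
qed

lemma shift_int:
  assumes p: "\<And>m. h (m + int n) = (h m :: real)" and n: "n > 0"
  shows "(\<Sum>l<n. h (int l + s)) = (\<Sum>l<n. h (int l))"
proof -
  define q where "q = nat \<bar>s\<bar>"
  have ge: "s + int n * int q \<ge> 0" unfolding q_def using n
    by (smt (verit, best) int_nat_eq mult_le_cancel_right1 of_nat_0_less_iff of_nat_1 of_nat_less_iff zero_less_imp_eq_int)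
  have "(\<Sum>l<n. h (int l + s)) = (\<Sum>l<n. h (int l + int (nat (s + int n * int q))))"
  proof (rule sum.cong, simp)
    fix l
    have pm: "h (m + int n * int q) = h m" for m by (rule per_mult[where h=h and n=n]) (rule p)
    have "int l + int (nat (s + int n * int q)) = (int l + s) + int n * int q" using ge by simp
    then show "h (int l + s) = h (int l + int (nat (s + int n * int q)))" using pm[of "int l + s"] by (simp add: add.assoc)
  qed
  also have "\<dots> = (\<Sum>l<n. h (int l))" by (rule shift_nat[where h=h and n=n, OF p])
  finally show ?thesis .
qed

lemma odd_sum:
  assumes p: "\<And>m. h (m + int n) = (h m :: real)" and o: "\<And>m. h (- m) = - h m"
  shows "(\<Sum>l<n. h (int l)) = 0"
proof (cases "n = 0")
  case True then show ?thesis by simp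
next
  case False
  have "(\<Sum>l<n. h (int l)) = (\<Sum>l<n. h (int (n - Suc l)))" by (rule sum.nat_diff_reindex[symmetric])
  also have "\<dots> = (\<Sum>l<n. - h (int l + 1))"
  proof (rule sum.cong, simp)
    fix l assume "l \<in> {..<n}"
    then have "int (n - Suc l) = - (int l + 1 - int n)" by auto
    then have "h (int (n - Suc l)) = - h (int l + 1 - int n)" using o[of "int l + 1 - int n"] by simp
    also have "h (int l + 1 - int n) = h (int l + 1)" using p[of "int l + 1 - int n"] by simp
    finally show "h (int (n - Suc l)) = - h (int l + 1)" .
  qed
  also have "\<dots> = - (\<Sum>l<n. h (int l))" using shift_int[where h=h and n=n and s=1, OF p] False by (simp add: sum_negf)
  finally show ?thesis by simp
qed


lemma cos_per: "cos (x + 2 * pi * real_of_int j) = cos x"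
  by (simp add: cos_add)
lemma sin_per: "sin (x + 2 * pi * real_of_int j) = sin x"
  by (simp add: sin_add)

lemma W_per: "W eps tau (x + 2 * pi * real_of_int j) = W eps tau x"
  unfolding W_def by (simp add: cos_per sin_per)
lemma W_even: "W eps tau (- x) = W eps tau x"
  unfolding W_def by simp

lemma sin_sum_zero:
  assumes n: "n > 0"
  shows "(\<Sum>l<n. sin (2 * pi * real_of_int m * real l / real n)) = 0"
proof -
  define h where "h j = sin (2 * pi * real_of_int m * real_of_int j / real n)" for j :: int
  have p: "h (j + int n) = h j" for j
  proof -
    have "2 * pi * real_of_int m * real_of_int (j + int n) / real n
        = 2 * pi * real_of_int m * real_of_int j / real n + 2 * pi * real_of_int m"
      using n by (simp add: field_simps)
    then show ?thesis unfolding h_def by (simp add: sin_per)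
  qed
  have o: "h (- j) = - h j" for j unfolding h_def by simp
  have "(\<Sum>l<n. h (int l)) = 0" by (rule odd_sum[where h=h and n=n, OF p o])
  then show ?thesis unfolding h_def by simp
qed

lemma cos_sum_zero:
  assumes n: "n > 0" and m0: "m \<noteq> 0" and mn: "\<bar>m\<bar> < int n"
  shows "(\<Sum>l<n. cos (2 * pi * real_of_int m * real l / real n)) = 0"
proof -
  define a where "a = 2 * pi * real_of_int m / real n"
  define f where "f l = sin (real l * a - a / 2)" for l :: nat
  have tel: "f (Suc l) - f l = 2 * sin (a / 2) * cos (real l * a)" for l
  proof -
    have "f (Suc l) = sin (real l * a + a / 2)" unfolding f_def by (simp add: algebra_simps)
    then show ?thesis unfolding f_def by (simp add: sin_add sin_diff algebra_simps)
  qed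
  have "(\<Sum>l<n. f (Suc l) - f l) = f n - f 0" by (rule sum_lessThan_telescope)
  moreover have "f n = f 0"
  proof -
    have eq: "real n * a - a / 2 = - a / 2 + 2 * pi * real_of_int m" unfolding a_def using n by simp
    show ?thesis unfolding f_def eq sin_per by simp
  qed
  ultimately have "2 * sin (a / 2) * (\<Sum>l<n. cos (real l * a)) = 0"
    by (simp add: tel sum_distrib_left)
  moreover have "sin (a / 2) \<noteq> 0"
  proof
    assume "sin (a / 2) = 0"
    moreover have "\<bar>a / 2\<bar> < pi"
    proof -
      have A: "\<bar>a / 2\<bar> = pi * (\<bar>real_of_int m\<bar> / real n)" unfolding a_def by (simp add: abs_mult)
      have B: "\<bar>real_of_int m\<bar> / real n < 1" using mn n
        by (simp add: divide_less_eq)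
      have C: "pi * (\<bar>real_of_int m\<bar> / real n) < pi" using mult_strict_left_mono[OF B pi_gt_zero] by simp
      show ?thesis unfolding A using C .
    qed
    ultimately have "a / 2 = 0" using sin_zero_pi_iff by blast
    then show False unfolding a_def using m0 n by simp
  qed
  ultimately have "(\<Sum>l<n. cos (real l * a)) = 0" by simp
  moreover have "real l * a = 2 * pi * real_of_int m * real l / real n" for l unfolding a_def by simp
  ultimately show ?thesis by simp
qed


definition cas :: "real \<Rightarrow> real" where "cas x = cos x + sin x"

lemma cas_prod: "cas a * cas b = cos (a - b) + sin (a + b)"
  unfolding cas_def by (simp add: cos_diff sin_add algebra_simps)

lemma cas_add: "cas (a + b) = cos a * cos b - sin a * sin b + sin a * cos b + cos a * sin b"
  unfolding cas_def by (simp add: cos_add sin_add)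

lemma cas_per: "cas (x + 2 * pi * real_of_int j) = cas x"
  unfolding cas_def by (simp add: cos_per sin_per)

lemma hartley:
  assumes n: "n > 0" and k: "k < n" and k': "k' < n"
  shows "(\<Sum>l<n. cas (2 * pi * real k * real l / real n) * cas (2 * pi * real k' * real l / real n))
     = (if k = k' then real n else 0)"
proof -
  have t: "cas (2 * pi * real k * real l / real n) * cas (2 * pi * real k' * real l / real n)
     = cos (2 * pi * real_of_int (int k - int k') * real l / real n) + sin (2 * pi * real_of_int (int k + int k') * real l / real n)" for l
    unfolding cas_prod using n by (simp add: field_simps)
  have s: "(\<Sum>l<n. sin (2 * pi * real_of_int (int k + int k') * real l / real n)) = 0"
    by (rule sin_sum_zero[OF n])
  show ?thesis
  proof (cases "k = k'")
    case True
    then show ?thesis unfolding t sum.distrib s by simp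
  next
    case False
    have c: "(\<Sum>l<n. cos (2 * pi * real_of_int (int k - int k') * real l / real n)) = 0"
      by (rule cos_sum_zero[OF n]) (use False k k' in auto)
    show ?thesis unfolding t sum.distrib s c using False by simp
  qed
qed

definition mu :: "real \<Rightarrow> real \<Rightarrow> nat \<Rightarrow> nat \<Rightarrow> real" where
  "mu eps tau n k = (\<Sum>m<n. W eps tau (2 * pi * real m / real n) * (1 - cos (2 * pi * real k * real m / real n)))"

lemma eigen:
  assumes n: "n > 0" and i: "i < n"
  shows "(\<Sum>l<n. (cas (2 * pi * real k * real i / real n) - cas (2 * pi * real k * real l / real n)) * W eps tau (th n l - th n i))
     = cas (2 * pi * real k * real i / real n) * mu eps tau n k"
proof -
  define A where "A = 2 * pi * real k * real i / real n"
  define d where "d j = 2 * pi * real_of_int j / real n" for j :: int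
  define h where "h j = W eps tau (d j) * (cas A - cas (A + real k * d j))" for j
  define h2 where "h2 j = W eps tau (d j) * sin (real k * d j)" for j
  have dn: "d (j + int n) = d j + 2 * pi * real_of_int 1" for j
    unfolding d_def using n by (simp add: field_simps)
  have kdn: "real k * d (j + int n) = real k * d j + 2 * pi * real_of_int (int k)" for j
    unfolding dn by (simp add: algebra_simps)
  have hp: "h (j + int n) = h j" for j
    unfolding h_def kdn unfolding dn add.assoc[symmetric] W_per cas_per ..
  have h2p: "h2 (j + int n) = h2 j" for j
    unfolding h2_def kdn unfolding dn add.assoc[symmetric] W_per sin_per ..
  have h2o: "h2 (- j) = - h2 j" for j
  proof -
    have "d (- j) = - d j" unfolding d_def by simp
    then show ?thesis unfolding h2_def using W_even by simp
  qed
  have hs: "(\<Sum>l<n. h2 (int l)) = 0" by (rule odd_sum[where h=h2 and n=n, OF h2p h2o])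
  have "(\<Sum>l<n. (cas A - cas (2 * pi * real k * real l / real n)) * W eps tau (th n l - th n i))
      = (\<Sum>l<n. h (int l + - int i))"
  proof (rule sum.cong, simp)
    fix l
    have e1: "th n l - th n i = d (int l + - int i)" unfolding th_def d_def using n by (simp add: field_simps)
    have e2: "2 * pi * real k * real l / real n = A + real k * d (int l + - int i)"
      unfolding A_def d_def using n by (simp add: field_simps)
    show "(cas A - cas (2 * pi * real k * real l / real n)) * W eps tau (th n l - th n i) = h (int l + - int i)"
      unfolding h_def e1 e2 by simp
  qed
  also have "\<dots> = (\<Sum>l<n. h (int l))" by (rule shift_int[where h=h and n=n, OF hp n])
  also have "\<dots> = (\<Sum>l<n. cas A * (W eps tau (d (int l)) * (1 - cos (real k * d (int l))))
      + (sin A - cos A) * h2 (int l))"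
    unfolding h_def h2_def cas_add by (rule sum.cong) (simp_all add: cas_def algebra_simps)
  also have "\<dots> = cas A * mu eps tau n k"
    unfolding sum.distrib sum_distrib_left[symmetric] hs mu_def d_def by (simp add: ac_simps)
  finally show ?thesis unfolding A_def .
qed


lemma L1: "a > (0::real) \<Longrightarrow> ((\<lambda>e. exp(a/e)/(1+exp(a/e))) \<longlongrightarrow> 1) (at_right 0)" by real_asymp
lemma L2: "a < (0::real) \<Longrightarrow> ((\<lambda>e. exp(a/e)/(1+exp(a/e))) \<longlongrightarrow> 0) (at_right 0)" by real_asymp
lemma L3: "a < (0::real) \<Longrightarrow> ((\<lambda>e. exp(a/e)/(e*(1+exp(a/e))^2)) \<longlongrightarrow> 0) (at_right 0)" by real_asymp
lemma L4: "a > (0::real) \<Longrightarrow> ((\<lambda>e. exp(a/e)/(e*(1+exp(a/e))^2)) \<longlongrightarrow> 0) (at_right 0)" by real_asymp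

lemma ps_lim: "c \<noteq> tau \<Longrightarrow> ((\<lambda>e. ps e tau c) \<longlongrightarrow> (if c > tau then 1 else 0)) (at_right 0)"
  unfolding ps_def using L1[of "c - tau"] L2[of "c - tau"] by (cases "c > tau") auto

lemma pss_lim: "c \<noteq> tau \<Longrightarrow> ((\<lambda>e. pss e tau c) \<longlongrightarrow> 0) (at_right 0)"
  unfolding pss_def using L3[of "c - tau"] L4[of "c - tau"] by (cases "c > tau") auto

definition Wl :: "real \<Rightarrow> real \<Rightarrow> real" where
  "Wl tau d = (if cos d > tau then - cos d else 0)"

lemma W_lim: "cos d \<noteq> tau \<Longrightarrow> ((\<lambda>e. W e tau d) \<longlongrightarrow> Wl tau d) (at_right 0)"
proof -
  assume c: "cos d \<noteq> tau"
  have "((\<lambda>e. pss e tau (cos d) * (sin d)^2 - ps e tau (cos d) * cos d) \<longlongrightarrow>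
      0 * (sin d)^2 - (if cos d > tau then 1 else 0) * cos d) (at_right 0)"
    by (intro tendsto_intros pss_lim[OF c] ps_lim[OF c])
  then show ?thesis unfolding W_def Wl_def by (simp split: if_splits)
qed

lemma one_minus_cos_pos: "0 < x \<Longrightarrow> x < 2 * pi \<Longrightarrow> 0 < 1 - cos x"
proof -
  assume a: "0 < x" "x < 2 * pi"
  have "cos x = cos (2 * (x / 2))" by simp
  also have "\<dots> = 1 - 2 * (sin (x / 2))^2" by (rule cos_double_sin)
  finally have "1 - cos x = 2 * (sin (x / 2))^2" by simp
  moreover have "sin (x / 2) > 0" using a by (intro sin_gt_zero) auto
  ultimately show ?thesis by simp
qed

lemma mu_neg_eventually:
  assumes n: "n \<ge> 5" and t0: "0 \<le> tau" and t1: "tau < cos (2 * pi / 5)"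
    and tn: "\<forall>i\<in>{1..n}. tau \<noteq> cos (2 * pi * (real i - 1) / real n)"
    and k: "1 \<le> k" "k < n"
  shows "eventually (\<lambda>e. mu e tau n k < 0) (at_right 0)"
proof -
  define f where "f m = Wl tau (2 * pi * real m / real n) * (1 - cos (2 * pi * real k * real m / real n))" for m
  have cne: "cos (2 * pi * real m / real n) \<noteq> tau" if "m < n" for m
    using tn[rule_format, of "Suc m"] that by simp
  have lim: "((\<lambda>e. mu e tau n k) \<longlongrightarrow> (\<Sum>m<n. f m)) (at_right 0)"
    unfolding mu_def f_def
    by (intro tendsto_sum tendsto_mult tendsto_const W_lim cne) simp
  have nonpos: "f m \<le> 0" for m
  proof -
    have "1 - cos (2 * pi * real k * real m / real n) \<ge> 0" by simp
    moreover have "Wl tau (2 * pi * real m / real n) \<le> 0" unfolding Wl_def using t0 by auto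
    ultimately show ?thesis unfolding f_def by (simp add: mult_nonpos_nonneg)
  qed
  have f1: "f 1 < 0"
  proof -
    have "cos (2 * pi / 5) \<le> cos (2 * pi / real n)"
    proof (subst cos_mono_le_eq)
      show "2 * pi / real n \<le> 2 * pi / 5" using n by (intro divide_left_mono) auto
    qed (use n in \<open>auto simp: field_simps\<close>)
    then have c1: "cos (2 * pi * real 1 / real n) > tau" using t1 by simp
    have "0 < 1 - cos (2 * pi * real k * real 1 / real n)"
    proof (rule one_minus_cos_pos)
      show "0 < 2 * pi * real k * real 1 / real n" using k n by simp
      show "2 * pi * real k * real 1 / real n < 2 * pi" using k n by (simp add: field_simps)
    qed
    moreover have "Wl tau (2 * pi * real 1 / real n) < 0" unfolding Wl_def using c1 t0 by auto
    ultimately show ?thesis unfolding f_def by (simp add: mult_neg_pos)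
  qed
  have "(\<Sum>m<n. f m) = f 1 + (\<Sum>m\<in>{..<n} - {1}. f m)"
    using n by (subst sum.remove[of _ 1]) auto
  moreover have "(\<Sum>m\<in>{..<n} - {1}. f m) \<le> 0" by (rule sum_nonpos) (simp add: nonpos)
  ultimately have "(\<Sum>m<n. f m) < 0" using f1 by linarith
  then show ?thesis using order_tendstoD(2)[OF lim] by blast
qed


lemma ps_sin_sum:
  assumes n: "n > 0" and i: "i < n"
  shows "(\<Sum>l<n. ps eps tau (cos (th n l - th n i)) * sin (th n l - th n i)) = 0"
proof -
  define d where "d j = 2 * pi * real_of_int j / real n" for j :: int
  define h where "h j = ps eps tau (cos (d j)) * sin (d j)" for j
  have dn: "d (j + int n) = d j + 2 * pi * real_of_int 1" for j
    unfolding d_def using n by (simp add: field_simps)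
  have hp: "h (j + int n) = h j" for j
    unfolding h_def dn cos_per sin_per ..
  have ho: "h (- j) = - h j" for j
  proof -
    have "d (- j) = - d j" unfolding d_def by simp
    then show ?thesis unfolding h_def by simp
  qed
  have "(\<Sum>l<n. ps eps tau (cos (th n l - th n i)) * sin (th n l - th n i)) = (\<Sum>l<n. h (int l + - int i))"
  proof (rule sum.cong, simp)
    fix l
    have e1: "th n l - th n i = d (int l + - int i)" unfolding th_def d_def using n by (simp add: field_simps)
    show "ps eps tau (cos (th n l - th n i)) * sin (th n l - th n i) = h (int l + - int i)"
      unfolding h_def e1 ..
  qed
  also have "\<dots> = (\<Sum>l<n. h (int l))" by (rule shift_int[where h=h and n=n, OF hp n])
  also have "\<dots> = 0" by (rule odd_sum[where h=h and n=n, OF hp ho])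
  finally show ?thesis .
qed

lemma crit:
  assumes n: "n > 0" and e: "eps > 0"
  shows "critical_point n (fcost n eps tau) (regular_ngon n)"
  unfolding critical_point_def
proof (intro conjI allI impI)
  show "on_torus n (regular_ngon n)"
    unfolding on_torus_def ngon_xv by (simp add: norm_eq_sqrt_inner xx)
  fix i assume i: "i < n"
  have "rgrad n (fcost n eps tau) (regular_ngon n) i = (tv n i \<bullet> gv n eps tau (xv n) i) *\<^sub>R tv n i"
    unfolding rgrad_fcost[OF e i] ngon_xv proj_t ..
  also have "tv n i \<bullet> gv n eps tau (xv n) i = 0"
    unfolding gv_def inner_sum_right using ps_sin_sum[OF n i] by (simp add: xx tx)
  finally show "rgrad n (fcost n eps tau) (regular_ngon n) i = 0" by simp
qed

definition wv :: "nat \<Rightarrow> nat \<Rightarrow> cmat" where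
  "wv n k = (\<lambda>l. (if l < n then (1 / sqrt (real n)) * cas (2 * pi * real k * real l / real n) else 0) *\<^sub>R tv n l)"

lemma eig:
  assumes n: "n > 0" and e: "eps > 0"
  shows "hess_eigenvalues n (fcost n eps tau) (regular_ngon n) (mu eps tau n)"
  unfolding hess_eigenvalues_def
proof (intro exI[of _ "wv n"] conjI allI impI)
  fix k assume k: "k < n"
  show "tangent n (regular_ngon n) (wv n k)"
    unfolding tangent_def ngon_xv wv_def using xt[of n _ _] by simp
  fix l assume l: "l < n"
  have tti: "tv n i \<bullet> tv n i = 1" for i using tt[of n i i] by simp
  have "frob n (wv n k) (wv n l) = (\<Sum>i<n. (1 / real n) * (cas (2 * pi * real k * real i / real n) * cas (2 * pi * real l * real i / real n)))"
    unfolding frob_def wv_def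
  proof (rule sum.cong, simp)
    fix x assume x: "x \<in> {..<n}"
    have s: "1 / sqrt (real n) * (1 / sqrt (real n)) = 1 / real n" by (simp add: real_sqrt_mult_self)
    let ?A = "cas (2 * pi * real k * real x / real n)" and ?B = "cas (2 * pi * real l * real x / real n)"
    have "((1 / sqrt (real n) * ?A) *\<^sub>R tv n x) \<bullet> ((1 / sqrt (real n) * ?B) *\<^sub>R tv n x)
        = (1 / sqrt (real n) * (1 / sqrt (real n))) * (?A * ?B)" by (simp add: tti)
    then show "(if x < n then 1 / sqrt (real n) * ?A else 0) *\<^sub>R tv n x \<bullet> (if x < n then 1 / sqrt (real n) * ?B else 0) *\<^sub>R tv n x
        = 1 / real n * (?A * ?B)" using x s by simp
  qed
  also have "\<dots> = (if k = l then 1 else 0)"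
    unfolding sum_distrib_left[symmetric] hartley[OF n k l] using n by simp
  finally show "frob n (wv n k) (wv n l) = (if k = l then 1 else 0)" .
next
  fix k i assume k: "k < n" and i: "i < n"
  let ?a = "\<lambda>l. (1 / sqrt (real n)) * cas (2 * pi * real k * real l / real n)"
  have "rhess n (fcost n eps tau) (regular_ngon n) (wv n k) i =
     (\<Sum>l<n. (?a i - ?a l) * W eps tau (th n l - th n i)) *\<^sub>R tv n i"
    by (rule hess_scalar[OF e i]) (simp add: wv_def)
  also have "(\<Sum>l<n. (?a i - ?a l) * W eps tau (th n l - th n i)) =
     (1 / sqrt (real n)) * (\<Sum>l<n. (cas (2 * pi * real k * real i / real n) - cas (2 * pi * real k * real l / real n)) * W eps tau (th n l - th n i))"
    unfolding sum_distrib_left by (rule sum.cong) (simp_all add: algebra_simps)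
  also have "\<dots> = (1 / sqrt (real n)) * (cas (2 * pi * real k * real i / real n) * mu eps tau n k)"
    unfolding eigen[OF n i] ..
  finally show "rhess n (fcost n eps tau) (regular_ngon n) (wv n k) i = mu eps tau n k *\<^sub>R wv n k i"
    unfolding wv_def using i by simp
qed

theorem mainTheorem12:
  fixes n :: nat and tau :: real
  assumes "n \<ge> 5"
    and "0 \<le> tau" and "tau < cos (2 * pi / 5)"
    and "\<forall>i\<in>{1..n}. tau \<noteq> cos (2 * pi * (real i - 1) / real n)"
  shows "\<exists>eps0 > 0. \<forall>eps. 0 < eps \<and> eps \<le> eps0 \<longrightarrow>
           critical_point n (fcost n eps tau) (regular_ngon n) \<and>
           (\<exists>lam. hess_eigenvalues n (fcost n eps tau) (regular_ngon n) lam \<and>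
                  lam 0 = 0 \<and> (\<forall>k\<in>{1..<n}. lam k < 0))"
proof -
  have n: "n > 0" using assms(1) by simp
  have "eventually (\<lambda>e. \<forall>k\<in>{1..<n}. mu e tau n k < 0) (at_right 0)"
    by (rule eventually_ball_finite) (use mu_neg_eventually[OF assms] in auto)
  then obtain b where b: "b > 0" and hb: "\<And>e. e > 0 \<Longrightarrow> e < b \<Longrightarrow> \<forall>k\<in>{1..<n}. mu e tau n k < 0"
    unfolding eventually_at_right_field by auto
  show ?thesis
  proof (intro exI[of _ "b / 2"] conjI allI impI)
    show "b / 2 > 0" using b by simp
    fix eps assume ep: "0 < eps \<and> eps \<le> b / 2"
    then have e: "eps > 0" and eb: "eps < b" using b by auto
    show "critical_point n (fcost n eps tau) (regular_ngon n)" by (rule crit[OF n e])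
    show "\<exists>lam. hess_eigenvalues n (fcost n eps tau) (regular_ngon n) lam \<and>
                  lam 0 = 0 \<and> (\<forall>k\<in>{1..<n}. lam k < 0)"
      using eig[OF n e] hb[OF e eb] by (intro exI[of _ "mu eps tau n"]) (simp add: mu_def)
  qed
qed

end
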